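(* Let $(T_\infty,\ell)$ have law $\mu$. Then, as $m\to\infty$, $$\mathbb P(\Delta'_0\ge m)\sim\frac{2}{m},$$ meaning that the ratio of the two sides tends to 1.
   Context: **The law $\mu$.** $\rho_l$ is the law of a Galton–Watson plane tree with offspring law $P(k)=2^{-k-1}$, root label $l$, and each non-root vertex labeled by its parent's label plus an independent uniform element of $\{-1,0,1\}$. $\mu$ is the law of $(T_\infty,\ell)$, which has a spine $\varnothing=S(0),S(1),\dots$ whose labels $X_n=\ell(S(n))$ form a random walk from 0 with i.i.d. uniform steps in $\{-1,0,1\}$. Conditionally on $(X_n)$, independent trees $L_n$ (to the left of $S(n)$) and $R_n$ (to the right), each with law $\rho_{X_n}$, are grafted. **The variables $\Delta'_i$.** For $i\ge0$ let $\sigma_i=\inf\{n\ge0:X_n=-i\}$. Let $L'_i$ be the forest made of the trees $L_{\sigma_i+j}$, $0\le j<\sigma_{i+1}-\sigma_i$. Define $\Delta'_i=\max_{v\in L'_i}(-\ell(v))-i$. *)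

theory Defs
  imports "HOL-Probability.Probability"
begin

text \<open>
Explicit construction of the law mu on a product probability space.
Randomness: every index carries an independent pair
(offspring number with law P(k) = 2^(-k-1), label increment uniform on {-1,0,1}).
  Spine i        : the (i+1)-th spine step X_(i+1) - X_i is the increment coordinate.
  Vert n s u     : vertex u (Ulam-Harris word) of the tree grafted at S(n),
                   on the left (s = True, tree L_n) or right (s = False, tree R_n).
Conditionally on the spine, the trees L_n, R_n are independent Galton-Watson
trees with geometric(1/2) offspring, root label X_n, and each non-root vertex
labelled by its parent's label plus an independent uniform step, i.e. law rho_(X_n).
\<close>

datatype idx = Spine nat | Vert nat bool "nat list"

definition coord :: "(nat \<times> int) measure" where
  "coord = measure_pmf (pair_pmf (geometric_pmf (1/2)) (pmf_of_set {-1, 0, 1}))"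

definition Omega :: "(idx \<Rightarrow> nat \<times> int) measure" where
  "Omega = PiM UNIV (\<lambda>_. coord)"

definition X :: "(idx \<Rightarrow> nat \<times> int) \<Rightarrow> nat \<Rightarrow> int" where
  "X \<omega> n = (\<Sum>i<n. snd (\<omega> (Spine i)))"

definition gtree :: "(idx \<Rightarrow> nat \<times> int) \<Rightarrow> nat \<Rightarrow> bool \<Rightarrow> nat list set" where
  "gtree \<omega> n s = {u. \<forall>j < length u. u ! j < fst (\<omega> (Vert n s (take j u)))}"

definition glabel :: "(idx \<Rightarrow> nat \<times> int) \<Rightarrow> nat \<Rightarrow> bool \<Rightarrow> nat list \<Rightarrow> int" where
  "glabel \<omega> n s u = X \<omega> n + (\<Sum>j\<in>{1..length u}. snd (\<omega> (Vert n s (take j u))))"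

definition sigma :: "(idx \<Rightarrow> nat \<times> int) \<Rightarrow> nat \<Rightarrow> enat" where
  "sigma \<omega> i = (if \<exists>n. X \<omega> n = - int i then enat (LEAST n. X \<omega> n = - int i) else \<infinity>)"

definition Lforest :: "(idx \<Rightarrow> nat \<times> int) \<Rightarrow> nat \<Rightarrow> (nat \<times> nat list) set" where
  "Lforest \<omega> i = {(n, u). sigma \<omega> i \<le> enat n \<and> enat n < sigma \<omega> (Suc i) \<and> u \<in> gtree \<omega> n True}"

definition Delta' :: "(idx \<Rightarrow> nat \<times> int) \<Rightarrow> nat \<Rightarrow> ereal" where
  "Delta' \<omega> i = (SUP v \<in> Lforest \<omega> i. ereal (real_of_int (- glabel \<omega> (fst v) True (snd v)))) - ereal (real i)"

end

theory Submission
  imports Defs "HOL-Probability.Probability" "HOL-Real_Asymp.Real_Asymp"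
begin

definition wf :: "real \<Rightarrow> real" where "wf k = k*(k+3)/((k+1)*(k+2))"
lemma I1: assumes "k \<ge> 0" shows "wf(k+1) * (2 - (wf k + wf(k+1) + wf(k+2))/3) = 1"
proof -
  have h: "k+1 \<noteq> 0" "k+2 \<noteq> 0" "k+3 \<noteq> 0" "k+4\<noteq>0" using assms by auto
  have e: "k+1+1 = k+2" "k+1+2 = k+3" "k+2+1=k+3" "k+2+2 = k+4" "k+1+3=k+4" by auto
  show ?thesis unfolding wf_def e using h by (simp add: divide_simps) algebra
qed
lemma I2: assumes "x \<ge> 0" "m \<ge> 1" shows
 "m*(m+1)/((x+m+1)*(x+m+2)) = wf(x+m)*(m*(m+1)/((x-1+m+1)*(x-1+m+2)) + m*(m+1)/((x+m+1)*(x+m+2)) + m*(m+1)/((x+1+m+1)*(x+1+m+2)))/3"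
proof -
  have h: "x+m \<noteq> 0" "x+m+1 \<noteq> 0" "x+m+2 \<noteq> 0" "x+m+3\<noteq>0" using assms by auto
  have e: "x-1+m+1 = x+m" "x-1+m+2 = x+m+1" "x+1+m+1 = x+m+2" "x+1+m+2 = x+m+3" by auto
  show ?thesis unfolding wf_def e using h by (simp add: divide_simps) algebra
qed


lemma wf_nonneg: "k \<ge> 0 \<Longrightarrow> wf k \<ge> 0" unfolding wf_def by simp
lemma wf_le1: assumes "k \<ge> 0" shows "wf k \<le> 1"
proof -
  have "(k+1)*(k+2) > 0" using assms by simp
  moreover have "k*(k+3) \<le> (k+1)*(k+2)" by (simp add: algebra_simps)
  ultimately show ?thesis unfolding wf_def by simp
qed
lemma one_minus_wf: assumes "k \<ge> 0" shows "1 - wf k = 2/((k+1)*(k+2))"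
proof -
  have "(k+1)*(k+2) \<noteq> 0" using assms by simp
  then show ?thesis unfolding wf_def by (simp add: divide_simps) algebra
qed

definition Kop :: "nat \<Rightarrow> (int \<Rightarrow> real) \<Rightarrow> int \<Rightarrow> real" where
  "Kop m \<phi> x = (if x < 0 then 0 else wf (real_of_int x + real m) * (\<phi> (x-1) + \<phi> x + \<phi> (x+1)) / 3)"

definition psi :: "nat \<Rightarrow> int \<Rightarrow> real" where
  "psi m x = (if x < 0 then 0 else (real_of_int x+1)*(real_of_int x+1+(real m+1)^2))"

lemma psi_poly: "x \<ge> -1 \<Longrightarrow> psi m x = (real_of_int x+1)*(real_of_int x+1+(real m+1)^2)"
  unfolding psi_def by (cases "x = -1") auto

lemma key_ineq:
  assumes x: "x \<ge> 0" and m: "m \<ge> 1"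
  shows "1 \<le> 3 * (psi m x - Kop m (psi m) x)"
proof -
  define y where "y = real_of_int x + 1"
  define A where "A = (real m + 1)^2"
  define k where "k = real_of_int x + real m"
  have y1: "y \<ge> 1" using x by (simp add: y_def)
  have k0: "k \<ge> 0" using x by (simp add: k_def)
  have ps: "psi m (x-1) + psi m x + psi m (x+1) = 3*(y*(y+A)) + 2"
    using x by (simp add: psi_poly y_def A_def algebra_simps power2_eq_square)
  have K: "Kop m (psi m) x = wf k * (3*(y*(y+A)) + 2)/3"
    using x ps by (simp add: Kop_def k_def)
  have px: "psi m x = y*(y+A)" using x by (simp add: psi_poly y_def A_def)
  define Q where "Q = (k+1)*(k+2)"
  have Qpos: "Q > 0" using k0 by (simp add: Q_def)
  have w1: "1 - wf k = 2/Q" using one_minus_wf[OF k0] by (simp add: Q_def)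
  have QP: "Q \<le> 2*(y*(y+A))"
  proof -
    have "Q = (y + real m)*(y + real m + 1)" by (simp add: Q_def k_def y_def algebra_simps)
    also have "... = y*y + (2*real m+1)*y + (real m*real m + real m)" by (simp add: algebra_simps)
    finally have Qe: "Q = y*y + (2*real m+1)*y + (real m*real m + real m)" .
    have a: "y*y \<ge> 1" using mult_mono[OF y1 y1] y1 by simp
    have c: "2*A - 2*real m - 1 \<ge> 0" unfolding A_def by (simp add: power2_eq_square algebra_simps)
    have b: "(2*A - 2*real m - 1)*y \<ge> (2*A - 2*real m - 1)"
      using mult_left_mono[OF y1 c] by simp
    have "2*(y*(y+A)) = y*y + (2*real m + 1)*y + (y*y + (2*A - 2*real m - 1)*y)"
      by (simp add: algebra_simps)
    moreover have "y*y + (2*A - 2*real m - 1)*y \<ge> real m*real m + real m"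
    proof -
      have mm: "real m * real m \<ge> 0" "real m \<ge> 0" by simp_all
      have "2*A - 2*real m - 1 = 2*(real m*real m) + 2*real m + 1" unfolding A_def by (simp add: power2_eq_square algebra_simps)
      then show ?thesis using a b mm by (smt (verit))
    qed
    ultimately show ?thesis using Qe by linarith
  qed
  have wle: "wf k \<le> 1" using wf_le1[OF k0] .
  have P0: "y*(y+A) \<ge> 0" using y1 unfolding A_def by simp
  have "3*(psi m x - Kop m (psi m) x) = 3*(y*(y+A))*(1 - wf k) - 2*wf k"
    using K px by (simp add: algebra_simps)
  also have "... = 6*(y*(y+A))/Q - 2*wf k" using w1 by simp
  also have "6*(y*(y+A))/Q \<ge> 3" using QP Qpos by (simp add: field_simps)
  then have "6*(y*(y+A))/Q - 2*wf k \<ge> 1" using wle by linarith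
  finally show ?thesis by simp
qed

lemma Kop_mono: "(\<And>x. \<phi> x \<le> \<gamma> x) \<Longrightarrow> Kop m \<phi> x \<le> Kop m \<gamma> x"
  unfolding Kop_def
  by (auto intro!: divide_right_mono mult_left_mono add_mono wf_nonneg)

lemma Kop_nonneg: "(\<And>x. \<phi> x \<ge> 0) \<Longrightarrow> Kop m \<phi> x \<ge> 0"
  unfolding Kop_def by (auto intro!: divide_nonneg_pos mult_nonneg_nonneg add_nonneg_nonneg wf_nonneg)

lemma Kop_lin: "Kop m (\<lambda>x. c * (\<phi> x - \<gamma> x)) x = c * (Kop m \<phi> x - Kop m \<gamma> x)"
  unfolding Kop_def by (simp add: algebra_simps add_divide_distrib diff_divide_distrib)

lemma psi_nonneg: "psi m x \<ge> 0" unfolding psi_def by auto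

lemma op_lemma:
  fixes D :: "nat \<Rightarrow> int \<Rightarrow> real"
  assumes m: "m \<ge> 1"
    and neg: "\<And>N x. x < 0 \<Longrightarrow> D N x = 0"
    and nn: "\<And>N x. 0 \<le> D N x"
    and D0: "\<And>x. D 0 x \<le> 1"
    and step: "\<And>N x. x \<ge> 0 \<Longrightarrow> D (Suc N) x \<le> wf (real_of_int x + real m) * (D N (x-1) + D N x + D N (x+1)) / 3"
  shows "(\<lambda>N. D N x) \<longlonglongrightarrow> 0"
proof -
  define ps where "ps j = (Kop m ^^ j) (psi m)" for j
  have ps_Suc: "ps (Suc j) = Kop m (ps j)" for j by (simp add: ps_def)
  have ps_nn: "ps j x \<ge> 0" for j x
    by (induction j arbitrary: x) (auto simp: ps_def psi_nonneg intro!: Kop_nonneg)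
  have ps_neg: "x < 0 \<Longrightarrow> ps j x = 0" for j x
    by (cases j) (auto simp: ps_def Kop_def psi_def)
  have bound: "D j x \<le> 3 * (ps j x - ps (Suc j) x)" for j x
  proof (induction j arbitrary: x)
    case 0
    show ?case
    proof (cases "x < 0")
      case True then show ?thesis using neg ps_neg[of x 0] ps_neg[of x 1] by simp
    next
      case False
      then show ?thesis using D0[of x] key_ineq[of x m] m by (simp add: ps_def)
    qed
  next
    case (Suc j)
    show ?case
    proof (cases "x < 0")
      case True then show ?thesis using neg ps_neg[of x "Suc j"] ps_neg[of x "Suc (Suc j)"] by simp
    next
      case False
      have "D (Suc j) x \<le> Kop m (D j) x" using step[of x j] False by (simp add: Kop_def)
      also have "... \<le> Kop m (\<lambda>x. 3 * (ps j x - ps (Suc j) x)) x"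
        by (rule Kop_mono) (rule Suc.IH)
      also have "... = 3 * (ps (Suc j) x - ps (Suc (Suc j)) x)"
        using Kop_lin[of m 3 "ps j" "ps (Suc j)" x] by (simp add: ps_Suc)
      finally show ?thesis .
    qed
  qed
  have sums: "(\<Sum>j<N. D j x) \<le> 3 * psi m x" for N
  proof -
    have "(\<Sum>j<N. D j x) \<le> (\<Sum>j<N. 3 * (ps j x - ps (Suc j) x))"
      by (rule sum_mono) (rule bound)
    also have "... = 3 * (ps 0 x - ps N x)"
      using sum_lessThan_telescope'[of "\<lambda>j. ps j x" N] sum_distrib_left[of 3 "\<lambda>j. ps j x - ps (Suc j) x" "{..<N}"]
      by simp
    also have "... \<le> 3 * psi m x" using ps_nn[of N x] by (simp add: ps_def)
    finally show ?thesis .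
  qed
  have "summable (\<lambda>j. D j x)"
    by (rule summableI_nonneg_bounded[where x="3 * psi m x"]) (use nn sums in auto)
  then show ?thesis by (rule summable_LIMSEQ_zero)
qed


fun gv :: "nat \<Rightarrow> int \<Rightarrow> real" where
  "gv 0 b = (if b \<le> 0 then 1 else 0)"
| "gv (Suc h) b = (if b \<le> 0 then 1 / (2 - (gv h (b-1) + gv h b + gv h (b+1))/3) else 0)"

definition Wt :: "int \<Rightarrow> real" where
  "Wt b = (if b \<le> 0 then wf (real_of_int (1 - b)) else 0)"

lemma wf0: "wf 0 = 0" by (simp add: wf_def)

lemma gv_pos: "b > 0 \<Longrightarrow> gv h b = 0" by (cases h) auto

lemma gv_bounds: "0 \<le> gv h b \<and> gv h b \<le> 1"
proof (induction h arbitrary: b)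
  case 0 then show ?case by simp
next
  case (Suc h)
  define t where "t = (gv h (b-1) + gv h b + gv h (b+1))/3"
  have "0 \<le> t" "t \<le> 1" using Suc[of "b-1"] Suc[of b] Suc[of "b+1"] by (auto simp: t_def)
  then have "0 \<le> 1/(2-t)" "1/(2-t) \<le> 1" by (auto simp: field_simps)
  then show ?case by (simp add: t_def[symmetric])
qed

lemma Wt_bounds: "0 \<le> Wt b \<and> Wt b \<le> 1"
  unfolding Wt_def using wf_nonneg wf_le1 by auto

lemma Wt_fix: assumes "b \<le> 0" shows "Wt b = 1 / (2 - (Wt (b-1) + Wt b + Wt (b+1))/3)"
proof -
  define k where "k = real_of_int (-b)"
  have k0: "k \<ge> 0" using assms by (simp add: k_def)
  have a: "Wt b = wf (k+1)" using assms by (simp add: Wt_def k_def)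
  have c: "Wt (b-1) = wf (k+2)" using assms by (simp add: Wt_def k_def)
  have d: "Wt (b+1) = wf k"
  proof (cases "b+1 \<le> 0")
    case True then show ?thesis by (simp add: Wt_def k_def)
  next
    case False then have "b = 0" using assms by simp
    then show ?thesis by (simp add: Wt_def k_def wf0)
  qed
  have "wf(k+1) * (2 - (wf k + wf(k+1) + wf(k+2))/3) = 1" by (rule I1[OF k0])
  moreover have "2 - (wf k + wf(k+1) + wf(k+2))/3 \<noteq> 0" using calculation by auto
  ultimately show ?thesis unfolding a c d by (simp add: field_simps)
qed

lemma gv_ge: "Wt b \<le> gv h b"
proof (induction h arbitrary: b)
  case 0 show ?case
  proof (cases "b \<le> 0")
    case True then show ?thesis using Wt_bounds[of b] by simp
  next
    case False then show ?thesis by (simp add: Wt_def)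
  qed
next
  case (Suc h)
  show ?case
  proof (cases "b \<le> 0")
    case False then show ?thesis by (simp add: Wt_def)
  next
    case True
    define \<alpha> where "\<alpha> = (gv h (b-1) + gv h b + gv h (b+1))/3"
    define \<beta> where "\<beta> = (Wt (b-1) + Wt b + Wt (b+1))/3"
    have ab: "\<beta> \<le> \<alpha>" using Suc[of "b-1"] Suc[of b] Suc[of "b+1"] by (simp add: \<alpha>_def \<beta>_def)
    have a1: "\<alpha> \<le> 1" using gv_bounds[of h "b-1"] gv_bounds[of h b] gv_bounds[of h "b+1"] by (simp add: \<alpha>_def)
    have "1/(2-\<beta>) \<le> 1/(2-\<alpha>)" using ab a1 by (simp add: frac_le)
    then show ?thesis using True Wt_fix[OF True] by (simp add: \<alpha>_def \<beta>_def)
  qed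
qed

lemma gv_lim: "(\<lambda>h. gv h b) \<longlonglongrightarrow> Wt b"
proof (cases "b \<le> 0")
  case False
  have "gv h b = 0" for h using False by (cases h) auto
  then have "(\<lambda>h. gv h b) = (\<lambda>h. 0)" by auto
  then show ?thesis using False by (simp add: Wt_def)
next
  case True
  define D where "D h x = (if x < 0 then 0 else gv h (-x) - Wt (-x))" for h x
  have "(\<lambda>h. D h (-b)) \<longlonglongrightarrow> 0"
  proof (rule op_lemma[where m=1])
    show "\<And>N x. x < 0 \<Longrightarrow> D N x = 0" by (simp add: D_def)
    show "\<And>N x. 0 \<le> D N x" using gv_ge by (simp add: D_def)
    show "\<And>x. D 0 x \<le> 1" using Wt_bounds by (simp add: D_def)
    fix N x :: int
    fix h :: nat
    assume x: "x \<ge> 0"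
    show "D (Suc h) x \<le> wf (real_of_int x + real 1) * (D h (x-1) + D h x + D h (x+1)) / 3"
    proof -
      define b where "b = -x"
      have b0: "b \<le> 0" using x by (simp add: b_def)
      define \<alpha> where "\<alpha> = (gv h (b-1) + gv h b + gv h (b+1))/3"
      define \<beta> where "\<beta> = (Wt (b-1) + Wt b + Wt (b+1))/3"
      have e1: "gv h (b-1) - Wt (b-1) = D h (x+1)" using x by (simp add: D_def b_def)
      have e2: "gv h b - Wt b = D h x" using x by (simp add: D_def b_def)
      have e3: "gv h (b+1) - Wt (b+1) = D h (x-1)"
      proof (cases "x = 0")
        case True then show ?thesis by (simp add: D_def b_def Wt_def gv_pos)
      next
        case False then show ?thesis using x by (simp add: D_def b_def)
      qed
      have ad: "\<alpha> - \<beta> = (D h (x-1) + D h x + D h (x+1))/3"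
        using e1 e2 e3 by (simp add: \<alpha>_def \<beta>_def field_simps)
      have ab: "\<beta> \<le> \<alpha>" using gv_ge[of "b-1" h] gv_ge[of b h] gv_ge[of "b+1" h] by (simp add: \<alpha>_def \<beta>_def)
      have a1: "\<alpha> \<le> 1" using gv_bounds[of h "b-1"] gv_bounds[of h b] gv_bounds[of h "b+1"] by (simp add: \<alpha>_def)
      have b1: "\<beta> \<le> 1" using ab a1 by simp
      have Wb: "Wt b = 1/(2-\<beta>)" using Wt_fix[OF b0] by (simp add: \<beta>_def)
      have Wx: "Wt b = wf (real_of_int x + 1)" using x by (simp add: Wt_def b_def add.commute)
      have "D (Suc h) x = 1/(2-\<alpha>) - 1/(2-\<beta>)"
        using x b0 Wb by (simp add: D_def b_def[symmetric] \<alpha>_def)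
      also have "... = (\<alpha> - \<beta>)/((2-\<alpha>)*(2-\<beta>))" using a1 b1 by (simp add: field_simps)
      also have "... \<le> (\<alpha> - \<beta>)/(2-\<beta>)"
      proof -
        have "(2-\<beta>) \<le> (2-\<alpha>)*(2-\<beta>)" using a1 b1 by (simp add: mult_le_cancel_right1)
        then show ?thesis using ab b1 by (intro divide_left_mono) auto
      qed
      also have "... = Wt b * (\<alpha> - \<beta>)" using Wb by simp
      finally show ?thesis using ad Wx by simp
    qed
  qed simp
  moreover have "D h (-b) = gv h b - Wt b" for h using True by (simp add: D_def)
  ultimately have "(\<lambda>h. gv h b - Wt b) \<longlonglongrightarrow> 0" by simp
  then show ?thesis by (simp add: LIM_zero_iff)
qed

fun V :: "nat \<Rightarrow> nat \<Rightarrow> int \<Rightarrow> real" where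
  "V m 0 x = 1"
| "V m (Suc N) x = (if x = -1 then 1 else Wt (1 - int m - x) * (V m N (x-1) + V m N x + V m N (x+1))/3)"

definition fv :: "nat \<Rightarrow> int \<Rightarrow> real" where
  "fv m x = real m * (real m+1)/((real_of_int x+real m+1)*(real_of_int x+real m+2))"

lemma fv_m1: "m \<ge> 1 \<Longrightarrow> fv m (-1) = 1" by (simp add: fv_def)
lemma fv_bounds: assumes "m \<ge> 1" "x \<ge> -1" shows "0 \<le> fv m x \<and> fv m x \<le> 1"
proof -
  have x: "real_of_int x \<ge> -1" using assms by simp
  have p: "(real_of_int x+real m+1)*(real_of_int x+real m+2) > 0" using x assms by (simp add: add_pos_pos)
  have "real m * (real m+1) \<le> (real_of_int x+real m+1)*(real_of_int x+real m+2)"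
    using x by (intro mult_mono) auto
  then show ?thesis using p unfolding fv_def by auto
qed

lemma fv_fix: assumes "m \<ge> 1" "x \<ge> 0"
  shows "fv m x = wf (real_of_int x + real m) * (fv m (x-1) + fv m x + fv m (x+1))/3"
  using I2[of "real_of_int x" "real m"] assms by (simp add: fv_def)

lemma Wt_spine: "m \<ge> 1 \<Longrightarrow> x \<ge> 0 \<Longrightarrow> Wt (1 - int m - x) = wf (real_of_int x + real m)"
  by (simp add: Wt_def add.commute)

lemma V_ge: assumes "m \<ge> 1" shows "x \<ge> -1 \<Longrightarrow> fv m x \<le> V m N x"
proof (induction N arbitrary: x)
  case 0 then show ?case using fv_bounds[OF assms] by simp
next
  case (Suc N)
  show ?case
  proof (cases "x = -1")
    case True then show ?thesis using fv_m1[OF assms] by simp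
  next
    case False
    then have x0: "x \<ge> 0" using Suc.prems by simp
    have "fv m x = wf (real_of_int x + real m) * (fv m (x-1) + fv m x + fv m (x+1))/3"
      by (rule fv_fix[OF assms x0])
    also have "... \<le> wf (real_of_int x + real m) * (V m N (x-1) + V m N x + V m N (x+1))/3"
      using Suc.IH[of "x-1"] Suc.IH[of x] Suc.IH[of "x+1"] x0
      by (intro divide_right_mono mult_left_mono add_mono wf_nonneg) auto
    finally show ?thesis using False x0 Wt_spine[OF assms x0] by simp
  qed
qed

lemma V_lim: assumes m: "m \<ge> 1" shows "(\<lambda>N. V m N 0) \<longlonglongrightarrow> real m / (real m + 2)"
proof -
  define D where "D N x = (if x < 0 then 0 else V m N x - fv m x)" for N x
  have "(\<lambda>N. D N 0) \<longlonglongrightarrow> 0"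
  proof (rule op_lemma[OF m])
    show "\<And>N x. x < 0 \<Longrightarrow> D N x = 0" by (simp add: D_def)
    show "\<And>N x. 0 \<le> D N x" using V_ge[OF m] by (simp add: D_def)
    show "\<And>x. D 0 x \<le> 1" using fv_bounds[OF m] by (simp add: D_def)
    fix N x :: int
    fix h :: nat
    assume x: "x \<ge> 0"
    have e3: "V m h (x-1) - fv m (x-1) = D h (x-1)"
    proof (cases "x = 0")
      case True then show ?thesis using fv_m1[OF m] by (cases h) (simp_all add: D_def)
    next
      case False then show ?thesis using x by (simp add: D_def)
    qed
    have "D (Suc h) x = wf (real_of_int x + real m) * (V m h (x-1) + V m h x + V m h (x+1))/3
         - wf (real_of_int x + real m) * (fv m (x-1) + fv m x + fv m (x+1))/3"
      using x Wt_spine[OF m x] fv_fix[OF m x] by (simp add: D_def)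
    also have "... = wf (real_of_int x + real m) * ((V m h (x-1) - fv m (x-1)) + (V m h x - fv m x) + (V m h (x+1) - fv m (x+1)))/3"
      by (simp add: field_simps)
    also have "... = wf (real_of_int x + real m) * (D h (x-1) + D h x + D h (x+1)) / 3"
      using e3 x by (simp add: D_def)
    finally show "D (Suc h) x \<le> wf (real_of_int x + real m) * (D h (x-1) + D h x + D h (x+1)) / 3" by simp
  qed
  moreover have "D N 0 = V m N 0 - real m / (real m + 2)" for N
  proof -
    have "fv m 0 = (real m * (real m+1))/((real m+1)*(real m+2))" by (simp add: fv_def add.commute)
    also have "... = real m / (real m + 2)"
    proof -
      have "real m + 1 \<noteq> 0" "real m + 2 \<noteq> 0" by (simp_all add: add_nonneg_pos)
      then show ?thesis by (simp add: divide_simps)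
    qed
    finally have "fv m 0 = real m / (real m + 2)" .
    then show ?thesis by (simp add: D_def)
  qed
  ultimately show ?thesis by (simp add: LIM_zero_iff)
qed


lemma coord_prob: "prob_space coord" unfolding coord_def by (rule prob_space_measure_pmf)

lemma Omega_prob: "prob_space Omega"
  unfolding Omega_def by (rule prob_space_PiM) (rule coord_prob)

interpretation O: prob_space Omega by (rule Omega_prob)

lemma space_coord[simp]: "space coord = UNIV" by (simp add: coord_def)
lemma sets_coord[simp]: "sets coord = UNIV" by (simp add: coord_def)

lemma space_Omega[simp]: "space Omega = UNIV"
  unfolding Omega_def space_PiM by simp

lemma meas_coord: "(\<lambda>\<omega>. \<omega> i) \<in> Omega \<rightarrow>\<^sub>M count_space UNIV"
proof -
  have "(\<lambda>\<omega>. \<omega> i) \<in> Omega \<rightarrow>\<^sub>M coord" unfolding Omega_def by (rule measurable_component_singleton) simp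
  moreover have "sets coord = sets (count_space UNIV)" by simp
  ultimately show ?thesis using measurable_cong_sets by blast
qed

lemma meas_map: "(\<lambda>\<omega>. map \<omega> xs) \<in> Omega \<rightarrow>\<^sub>M (count_space UNIV :: (nat \<times> int) list measure)"
proof (induction "xs")
  case Nil then show ?case by simp
next
  case (Cons i xs)
  have p: "(\<lambda>\<omega>. (\<omega> i, map \<omega> xs)) \<in> Omega \<rightarrow>\<^sub>M (count_space UNIV \<Otimes>\<^sub>M count_space UNIV)"
    by (rule measurable_Pair[OF meas_coord Cons.IH])
  have eqn: "(count_space UNIV \<Otimes>\<^sub>M count_space UNIV :: ((nat\<times>int) \<times> (nat\<times>int) list) measure) = count_space (UNIV \<times> UNIV)"
    by (intro pair_measure_countable) auto
  have p': "(\<lambda>\<omega>. (\<omega> i, map \<omega> xs)) \<in> Omega \<rightarrow>\<^sub>M count_space UNIV" using p by (simp only: eqn UNIV_Times_UNIV)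
  have c: "(\<lambda>(a, l). a # l) \<in> (count_space UNIV :: ((nat\<times>int) \<times> (nat\<times>int) list) measure) \<rightarrow>\<^sub>M count_space UNIV" by (rule measurable_count_space)
  have e: "(\<lambda>x. (case (x i, map x xs) of (a, l) \<Rightarrow> a # l)) = (\<lambda>\<omega>. map \<omega> (i # xs))" by auto
  from measurable_compose[OF p' c] show ?case by (simp only: e)
qed

lemma fin_dep_pred:
  assumes J: "finite J" and dep: "\<And>\<omega> \<omega>'::idx\<Rightarrow>nat\<times>int. (\<forall>i\<in>J. \<omega> i = \<omega>' i) \<Longrightarrow> P \<omega> = P \<omega>'"
  shows "P \<in> measurable Omega (count_space UNIV)"
proof -
  obtain xs where hxs: "set xs = J" using J finite_list by blast
  define R :: "(nat \<times> int) list \<Rightarrow> idx \<Rightarrow> nat \<times> int" where "R l = (\<lambda>i. case map_of (zip xs l) i of Some y \<Rightarrow> y | None \<Rightarrow> undefined)" for l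
  have "P \<omega> = P (R (map \<omega> xs))" for \<omega>
  proof (rule dep, intro ballI)
    fix i assume "i \<in> J"
    then have "map_of (zip xs (map \<omega> xs)) i = Some (\<omega> i)" by (simp add: map_of_zip_map hxs)
    then show "\<omega> i = R (map \<omega> xs) i" by (simp add: R_def)
  qed
  then have e: "(\<lambda>\<omega>. P (R (map \<omega> xs))) = P" by auto
  have "(\<lambda>\<omega>. (\<lambda>l. P (R l)) (map \<omega> xs)) \<in> measurable Omega (count_space UNIV)"
    by (rule measurable_compose[OF meas_map measurable_count_space])
  then show ?thesis by (simp only: e)
qed

lemma pred_sets: assumes "P \<in> measurable Omega (count_space UNIV)" shows "{\<omega>. P \<omega>} \<in> sets Omega"
proof -
  have "P -` {True} \<inter> space Omega \<in> sets Omega" by (rule measurable_sets[OF assms]) simp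
  moreover have "P -` {True} \<inter> space Omega = {\<omega>. P \<omega>}" by auto
  ultimately show ?thesis by simp
qed


lemma upd_meas: "(\<lambda>x. (snd x)(i := fst x)) \<in> (coord \<Otimes>\<^sub>M Omega) \<rightarrow>\<^sub>M Omega"
  unfolding Omega_def
  by (rule measurable_fun_upd[where J=UNIV]) (auto intro: measurable_snd measurable_fst)

lemma cond_coord:
  assumes E: "E \<in> sets Omega"
  shows "emeasure Omega E = (\<integral>\<^sup>+ x. emeasure Omega {\<omega>. fun_upd \<omega> i x \<in> E} \<partial>coord)"
proof -
  have D0: "distr (coord \<Otimes>\<^sub>M Omega) Omega (\<lambda>(x, X). X(i := x)) = Omega"
    using distr_pair_PiM_eq_PiM[of UNIV "\<lambda>_. coord" i] coord_prob unfolding Omega_def by simp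
  have fe: "(\<lambda>(x, X). X(i := x)) = (\<lambda>x. (snd x)(i := fst x))" by auto
  have D: "distr (coord \<Otimes>\<^sub>M Omega) Omega (\<lambda>x. (snd x)(i := fst x)) = Omega"
    by (subst fe[symmetric]) (rule D0)
  have "emeasure Omega E = emeasure (distr (coord \<Otimes>\<^sub>M Omega) Omega (\<lambda>x. (snd x)(i := fst x))) E"
    using D by simp
  also have "... = emeasure (coord \<Otimes>\<^sub>M Omega) ((\<lambda>x. (snd x)(i := fst x)) -` E \<inter> space (coord \<Otimes>\<^sub>M Omega))"
    by (rule emeasure_distr[OF upd_meas E])
  also have "... = (\<integral>\<^sup>+ x. emeasure Omega (Pair x -` ((\<lambda>x. (snd x)(i := fst x)) -` E \<inter> space (coord \<Otimes>\<^sub>M Omega))) \<partial>coord)"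
    by (rule O.emeasure_pair_measure_alt) (rule measurable_sets[OF upd_meas E])
  also have "... = (\<integral>\<^sup>+ x. emeasure Omega {\<omega>. fun_upd \<omega> i x \<in> E} \<partial>coord)"
    by (simp add: space_pair_measure vimage_def)
  finally show ?thesis .
qed

definition dep :: "(idx \<Rightarrow> nat \<times> int) set \<Rightarrow> idx set \<Rightarrow> bool" where
  "dep E A \<longleftrightarrow> (\<forall>\<omega> \<omega>'. (\<forall>i\<in>A. \<omega> i = \<omega>' i) \<longrightarrow> (\<omega> \<in> E \<longleftrightarrow> \<omega>' \<in> E))"

lemma dep_upd: "dep E A \<Longrightarrow> i \<notin> A \<Longrightarrow> fun_upd \<omega> i x \<in> E \<longleftrightarrow> \<omega> \<in> E"
  unfolding dep_def by (metis fun_upd_other)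

lemma indep_coords: "O.indep_vars (\<lambda>_. coord) (\<lambda>i \<omega>. \<omega> i) UNIV"
proof -
  have rv: "\<And>i. O.random_variable coord (\<lambda>\<omega>. \<omega> i)"
    unfolding Omega_def by (rule measurable_component_singleton) simp
  have c: "distr Omega coord (\<lambda>\<omega>. \<omega> i) = coord" for i
    unfolding Omega_def by (rule distr_PiM_component) (auto intro: coord_prob)
  have "distr Omega (\<Pi>\<^sub>M i\<in>UNIV. coord) (\<lambda>x. \<lambda>i\<in>UNIV. x i) = Omega"
    by (simp add: Omega_def[symmetric] distr_id2 restrict_UNIV)
  also have "... = (\<Pi>\<^sub>M i\<in>UNIV. distr Omega coord (\<lambda>\<omega>. \<omega> i))"
    by (simp only: c) (simp add: Omega_def)
  finally show ?thesis by (subst O.indep_vars_iff_distr_eq_PiM[OF _ rv]) auto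
qed

lemma ext_meas: "(\<lambda>r::idx \<Rightarrow> nat \<times> int. \<lambda>i. if i \<in> A then r i else (0, 0)) \<in> PiM A (\<lambda>_. coord) \<rightarrow>\<^sub>M Omega"
  unfolding Omega_def
proof (rule measurable_PiM_single')
  fix i :: idx
  show "(\<lambda>r. if i \<in> A then r i else (0, 0)) \<in> PiM A (\<lambda>_. coord) \<rightarrow>\<^sub>M coord"
    by (cases "i \<in> A") (auto intro: measurable_component_singleton)
qed simp

lemma dep_restrict_set:
  assumes E: "E \<in> sets Omega" and d: "dep E A"
  shows "\<exists>E' \<in> sets (PiM A (\<lambda>_. coord)). E = (\<lambda>\<omega>. restrict \<omega> A) -` E' \<inter> space Omega"
proof -
  define ext where "ext r = (\<lambda>i. if i \<in> A then r i else (0::nat, 0::int))" for r :: "idx \<Rightarrow> nat \<times> int"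
  define E' where "E' = ext -` E \<inter> space (PiM A (\<lambda>_. coord))"
  have "E' \<in> sets (PiM A (\<lambda>_. coord))" unfolding E'_def ext_def by (rule measurable_sets[OF ext_meas E])
  moreover have "E = (\<lambda>\<omega>. restrict \<omega> A) -` E' \<inter> space Omega"
  proof -
    have ee: "ext (restrict \<omega> A) \<in> E \<longleftrightarrow> \<omega> \<in> E" for \<omega>
    proof -
      have "\<forall>i\<in>A. ext (restrict \<omega> A) i = \<omega> i" by (simp add: ext_def)
      then show ?thesis using d unfolding dep_def by blast
    qed
    show ?thesis
    proof (rule set_eqI)
      fix \<omega> :: "idx \<Rightarrow> nat \<times> int"
      have "restrict \<omega> A \<in> space (PiM A (\<lambda>_. coord))" by (simp add: space_PiM)
      then show "\<omega> \<in> E \<longleftrightarrow> \<omega> \<in> (\<lambda>\<omega>. restrict \<omega> A) -` E' \<inter> space Omega"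
        using ee[of \<omega>] by (simp add: E'_def)
    qed
  qed
  ultimately show ?thesis by blast
qed

lemma indep_events:
  assumes E: "E \<in> sets Omega" and F: "F \<in> sets Omega" and dE: "dep E A" and dF: "dep F B" and AB: "A \<inter> B = {}"
  shows "measure Omega (E \<inter> F) = measure Omega E * measure Omega F"
proof -
  have iv: "O.indep_var (PiM A (\<lambda>_. coord)) (\<lambda>\<omega>. restrict (\<lambda>i. \<omega> i) A) (PiM B (\<lambda>_. coord)) (\<lambda>\<omega>. restrict (\<lambda>i. \<omega> i) B)"
    by (rule O.indep_var_restrict[OF indep_coords AB]) auto
  obtain E' where E': "E' \<in> sets (PiM A (\<lambda>_. coord))" "E = (\<lambda>\<omega>. restrict \<omega> A) -` E' \<inter> space Omega"
    using dep_restrict_set[OF E dE] by blast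
  obtain F' where F': "F' \<in> sets (PiM B (\<lambda>_. coord))" "F = (\<lambda>\<omega>. restrict \<omega> B) -` F' \<inter> space Omega"
    using dep_restrict_set[OF F dF] by blast
  have "measure Omega ((\<lambda>x. (restrict (\<lambda>i. x i) A, restrict (\<lambda>i. x i) B)) -` (E' \<times> F') \<inter> space Omega) =
      measure Omega ((\<lambda>\<omega>. restrict (\<lambda>i. \<omega> i) A) -` E' \<inter> space Omega) * measure Omega ((\<lambda>\<omega>. restrict (\<lambda>i. \<omega> i) B) -` F' \<inter> space Omega)"
    by (rule O.indep_varD[OF iv E'(1) F'(1)])
  moreover have "(\<lambda>x. (restrict (\<lambda>i. x i) A, restrict (\<lambda>i. x i) B)) -` (E' \<times> F') \<inter> space Omega =
     ((\<lambda>\<omega>. restrict (\<lambda>i. \<omega> i) A) -` E' \<inter> space Omega) \<inter> ((\<lambda>\<omega>. restrict (\<lambda>i. \<omega> i) B) -` F' \<inter> space Omega)"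
    by (simp only: vimage_def) blast
  ultimately have "measure Omega (((\<lambda>\<omega>. restrict (\<lambda>i. \<omega> i) A) -` E' \<inter> space Omega) \<inter> ((\<lambda>\<omega>. restrict (\<lambda>i. \<omega> i) B) -` F' \<inter> space Omega)) =
      measure Omega ((\<lambda>\<omega>. restrict (\<lambda>i. \<omega> i) A) -` E' \<inter> space Omega) * measure Omega ((\<lambda>\<omega>. restrict (\<lambda>i. \<omega> i) B) -` F' \<inter> space Omega)"
    by (simp only:)
  then show ?thesis by (simp only: E'(2)[symmetric] F'(2)[symmetric])
qed


fun shift :: "idx \<Rightarrow> idx" where
  "shift (Spine i) = Spine (Suc i)"
| "shift (Vert n s u) = Vert (Suc n) s u"

definition theta :: "(idx \<Rightarrow> nat \<times> int) \<Rightarrow> idx \<Rightarrow> nat \<times> int" where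
  "theta \<omega> = (\<lambda>i. \<omega> (shift i))"

lemma inj_shift: "inj shift"
proof (rule injI)
  fix x y show "shift x = shift y \<Longrightarrow> x = y" by (cases x; cases y) auto
qed

lemma theta_distr: "distr Omega Omega theta = Omega"
proof -
  have "distr (Pi\<^sub>M UNIV (\<lambda>_. coord)) (\<Pi>\<^sub>M i\<in>UNIV. coord) (\<lambda>\<omega>. \<lambda>n\<in>UNIV. \<omega> (shift n)) = (\<Pi>\<^sub>M i\<in>UNIV. coord)"
    using distr_PiM_reindex[of UNIV "\<lambda>_. coord" shift UNIV] coord_prob inj_shift by simp
  moreover have "(\<lambda>\<omega>. \<lambda>n\<in>UNIV. \<omega> (shift n)) = theta" by (simp add: theta_def[abs_def] restrict_UNIV)
  ultimately show ?thesis by (simp add: Omega_def)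
qed

lemma theta_meas: "theta \<in> Omega \<rightarrow>\<^sub>M Omega"
proof -
  have "(\<lambda>\<omega> i. \<omega> (shift i)) \<in> Omega \<rightarrow>\<^sub>M Omega"
    unfolding Omega_def by (rule measurable_PiM_single') (auto intro: measurable_component_singleton)
  then show ?thesis by (simp add: theta_def[abs_def])
qed

lemma theta_pres: assumes "B \<in> sets Omega" shows "measure Omega (theta -` B) = measure Omega B"
proof -
  have "measure Omega B = measure (distr Omega Omega theta) B" by (simp add: theta_distr)
  also have "... = measure Omega (theta -` B \<inter> space Omega)" by (rule measure_distr[OF theta_meas assms])
  finally show ?thesis by simp
qed

lemma theta_sets: "B \<in> sets Omega \<Longrightarrow> theta -` B \<in> sets Omega"
  using measurable_sets[OF theta_meas] by fastforce

lemma dep_theta: "dep (theta -` B) (range shift)"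
  unfolding dep_def theta_def by (auto simp: fun_eq_iff)

lemma int_coord:
  "(\<integral>\<^sup>+ x. f x \<partial>coord) = (\<integral>\<^sup>+ c. (\<Sum>d\<in>{-1,0,1}. f (c, d)) / 3 \<partial>geometric_pmf (1/2))"
proof -
  have "(\<integral>\<^sup>+ x. f x \<partial>coord) = (\<integral>\<^sup>+ c. \<integral>\<^sup>+ d. f (c, d) \<partial>pmf_of_set {-1,0,1::int} \<partial>geometric_pmf (1/2))"
    unfolding coord_def by (rule nn_integral_pair_pmf')
  also have "... = (\<integral>\<^sup>+ c. (\<Sum>d\<in>{-1,0,1}. f (c, d)) / 3 \<partial>geometric_pmf (1/2))"
    by (subst nn_integral_pmf_of_set) auto
  finally show ?thesis .
qed

lemma geom_gf:
  assumes r: "0 \<le> r" "r \<le> 1"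
  shows "(\<integral>\<^sup>+ c. ennreal (r^c) \<partial>geometric_pmf (1/2)) = ennreal (1/(2-r))"
proof -
  have "(\<integral>\<^sup>+ c. ennreal (r^c) \<partial>geometric_pmf (1/2)) = (\<integral>\<^sup>+ c. ennreal (pmf (geometric_pmf (1/2)) c) * ennreal (r^c) \<partial>count_space UNIV)"
    by (rule nn_integral_measure_pmf)
  also have "... = (\<Sum>c. ennreal (pmf (geometric_pmf (1/2)) c) * ennreal (r^c))"
    by (rule nn_integral_count_space_nat)
  also have "... = (\<Sum>c. ennreal (1/2 * (r/2)^c))"
  proof (rule suminf_cong)
    fix c :: nat
    have "pmf (geometric_pmf (1/2)) c = (1/2)^c * (1/2)" by (subst pmf_geometric) auto
    then show "ennreal (pmf (geometric_pmf (1/2)) c) * ennreal (r^c) = ennreal (1/2 * (r/2)^c)"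
      using r by (simp add: ennreal_mult[symmetric] power_divide field_simps)
  qed
  also have "... = ennreal (1/2 * (1/(1 - r/2)))"
  proof (rule suminf_ennreal_eq)
    show "\<And>i. 0 \<le> 1/2 * (r/2)^i" using r by simp
    have "norm (r/2) < 1" using r by simp
    then show "(\<lambda>i. 1/2 * (r/2)^i) sums (1/2 * (1/(1 - r/2)))" by (intro sums_mult geometric_sums)
  qed
  also have "1/2 * (1/(1 - r/2)) = 1/(2-r)" using r by (simp add: field_simps)
  finally show ?thesis .
qed


definition inT :: "(idx \<Rightarrow> nat \<times> int) \<Rightarrow> nat \<Rightarrow> bool \<Rightarrow> nat list \<Rightarrow> nat list \<Rightarrow> bool" where
  "inT \<omega> n s u v \<longleftrightarrow> (\<forall>j<length v. v!j < fst (\<omega> (Vert n s (u @ take j v))))"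

definition relL :: "(idx \<Rightarrow> nat \<times> int) \<Rightarrow> nat \<Rightarrow> bool \<Rightarrow> nat list \<Rightarrow> nat list \<Rightarrow> int" where
  "relL \<omega> n s u v = (\<Sum>j\<in>{1..length v}. snd (\<omega> (Vert n s (u @ take j v))))"

definition G :: "nat \<Rightarrow> nat \<Rightarrow> bool \<Rightarrow> nat list \<Rightarrow> int \<Rightarrow> (idx \<Rightarrow> nat \<times> int) set" where
  "G h n s u a = {\<omega>. \<forall>v. length v \<le> h \<longrightarrow> inT \<omega> n s u v \<longrightarrow> a \<le> relL \<omega> n s u v}"

definition H :: "nat \<Rightarrow> nat \<Rightarrow> bool \<Rightarrow> nat list \<Rightarrow> int \<Rightarrow> (idx \<Rightarrow> nat \<times> int) set" where
  "H h n s u a = {\<omega>. \<forall>v. length v \<le> h \<longrightarrow> inT \<omega> n s u v \<longrightarrow> a \<le> snd (\<omega> (Vert n s u)) + relL \<omega> n s u v}"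

definition desc :: "nat \<Rightarrow> bool \<Rightarrow> nat list \<Rightarrow> idx set" where
  "desc n s u = {Vert n s (u @ z) | z. True}"

lemma inT_Nil[simp]: "inT \<omega> n s u []" by (simp add: inT_def)
lemma relL_Nil[simp]: "relL \<omega> n s u [] = 0" by (simp add: relL_def)

lemma inT_Cons: "inT \<omega> n s u (k # v) \<longleftrightarrow> k < fst (\<omega> (Vert n s u)) \<and> inT \<omega> n s (u @ [k]) v"
  unfolding inT_def by (simp add: All_less_Suc2)

lemma relL_Cons: "relL \<omega> n s u (k # v) = snd (\<omega> (Vert n s (u @ [k]))) + relL \<omega> n s (u @ [k]) v"
proof -
  have "relL \<omega> n s u (k # v) = (\<Sum>j\<in>{1..Suc (length v)}. snd (\<omega> (Vert n s (u @ take j (k # v)))))"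
    by (simp add: relL_def)
  also have "... = snd (\<omega> (Vert n s (u @ take 1 (k # v)))) + (\<Sum>j\<in>{Suc 1..Suc (length v)}. snd (\<omega> (Vert n s (u @ take j (k # v)))))"
    by (rule sum.atLeast_Suc_atMost) simp
  also have "(\<Sum>j\<in>{Suc 1..Suc (length v)}. snd (\<omega> (Vert n s (u @ take j (k # v))))) = (\<Sum>j\<in>{1..length v}. snd (\<omega> (Vert n s (u @ take (Suc j) (k # v)))))"
    by (rule sum.shift_bounds_cl_Suc_ivl)
  also have "... = relL \<omega> n s (u @ [k]) v" by (simp add: relL_def)
  finally show ?thesis by simp
qed

lemma inT_cong: "(\<And>x. x \<in> desc n s u \<Longrightarrow> fst (\<omega> x) = fst (\<omega>' x)) \<Longrightarrow> inT \<omega> n s u v = inT \<omega>' n s u v"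
  unfolding inT_def desc_def by auto

lemma relL_cong: "(\<And>x. x \<in> desc n s u \<Longrightarrow> snd (\<omega> x) = snd (\<omega>' x)) \<Longrightarrow> relL \<omega> n s u v = relL \<omega>' n s u v"
  unfolding relL_def desc_def by (intro sum.cong) auto

lemma self_desc[simp]: "Vert n s u \<in> desc n s u"
  unfolding desc_def by (auto intro: exI[of _ "[]"])

lemma dep_G: "dep (G h n s u a) (desc n s u)"
  unfolding dep_def G_def
proof (intro allI impI)
  fix \<omega> \<omega>' :: "idx \<Rightarrow> nat \<times> int"
  assume "\<forall>i\<in>desc n s u. \<omega> i = \<omega>' i"
  then have "inT \<omega> n s u v = inT \<omega>' n s u v" "relL \<omega> n s u v = relL \<omega>' n s u v" for v
    by (auto intro!: inT_cong relL_cong)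
  then show "\<omega> \<in> {\<omega>. \<forall>v. length v \<le> h \<longrightarrow> inT \<omega> n s u v \<longrightarrow> a \<le> relL \<omega> n s u v} \<longleftrightarrow>
             \<omega>' \<in> {\<omega>. \<forall>v. length v \<le> h \<longrightarrow> inT \<omega> n s u v \<longrightarrow> a \<le> relL \<omega> n s u v}" by simp
qed

lemma dep_H: "dep (H h n s u a) (desc n s u)"
  unfolding dep_def H_def
proof (intro allI impI)
  fix \<omega> \<omega>' :: "idx \<Rightarrow> nat \<times> int"
  assume a: "\<forall>i\<in>desc n s u. \<omega> i = \<omega>' i"
  then have "inT \<omega> n s u v = inT \<omega>' n s u v" "relL \<omega> n s u v = relL \<omega>' n s u v" for v
    by (auto intro!: inT_cong relL_cong)
  moreover have "\<omega> (Vert n s u) = \<omega>' (Vert n s u)" using a by simp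
  ultimately show "\<omega> \<in> {\<omega>. \<forall>v. length v \<le> h \<longrightarrow> inT \<omega> n s u v \<longrightarrow> a \<le> snd (\<omega> (Vert n s u)) + relL \<omega> n s u v} \<longleftrightarrow>
             \<omega>' \<in> {\<omega>. \<forall>v. length v \<le> h \<longrightarrow> inT \<omega> n s u v \<longrightarrow> a \<le> snd (\<omega> (Vert n s u)) + relL \<omega> n s u v}" by simp
qed

lemma vert_fin: "finite ((\<lambda>j. Vert n s (u @ take j v)) ` {..length v})" by simp

lemma inT_fin: "(\<forall>x\<in>(\<lambda>j. Vert n s (u @ take j v)) ` {..length v}. \<omega> x = \<omega>' x) \<Longrightarrow> inT \<omega> n s u v = inT \<omega>' n s u v"
  unfolding inT_def by auto

lemma relL_fin: "(\<forall>x\<in>(\<lambda>j. Vert n s (u @ take j v)) ` {..length v}. \<omega> x = \<omega>' x) \<Longrightarrow> relL \<omega> n s u v = relL \<omega>' n s u v"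
  unfolding relL_def by (intro sum.cong) auto

lemma G_sets: "G h n s u a \<in> sets Omega"
proof -
  have "(\<lambda>\<omega>. \<forall>v. length v \<le> h \<longrightarrow> inT \<omega> n s u v \<longrightarrow> a \<le> relL \<omega> n s u v) \<in> measurable Omega (count_space UNIV)"
  proof (rule pred_intros_countable)
    fix v
    show "(\<lambda>\<omega>. length v \<le> h \<longrightarrow> inT \<omega> n s u v \<longrightarrow> a \<le> relL \<omega> n s u v) \<in> measurable Omega (count_space UNIV)"
    proof (rule fin_dep_pred[OF vert_fin])
      fix \<omega> \<omega>' :: "idx \<Rightarrow> nat \<times> int"
      assume a: "\<forall>i\<in>(\<lambda>j. Vert n s (u @ take j v)) ` {..length v}. \<omega> i = \<omega>' i"
      show "(length v \<le> h \<longrightarrow> inT \<omega> n s u v \<longrightarrow> a \<le> relL \<omega> n s u v) = (length v \<le> h \<longrightarrow> inT \<omega>' n s u v \<longrightarrow> a \<le> relL \<omega>' n s u v)"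
        using inT_fin[OF a] relL_fin[OF a] by simp
    qed
  qed
  then show ?thesis unfolding G_def by (rule pred_sets)
qed

lemma H_sets: "H h n s u a \<in> sets Omega"
proof -
  have "(\<lambda>\<omega>. \<forall>v. length v \<le> h \<longrightarrow> inT \<omega> n s u v \<longrightarrow> a \<le> snd (\<omega> (Vert n s u)) + relL \<omega> n s u v) \<in> measurable Omega (count_space UNIV)"
  proof (rule pred_intros_countable)
    fix v
    have z: "Vert n s u \<in> (\<lambda>j. Vert n s (u @ take j v)) ` {..length v}" by (rule image_eqI[of _ _ 0]) auto
    show "(\<lambda>\<omega>. length v \<le> h \<longrightarrow> inT \<omega> n s u v \<longrightarrow> a \<le> snd (\<omega> (Vert n s u)) + relL \<omega> n s u v) \<in> measurable Omega (count_space UNIV)"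
    proof (rule fin_dep_pred[OF vert_fin])
      fix \<omega> \<omega>' :: "idx \<Rightarrow> nat \<times> int"
      assume a: "\<forall>i\<in>(\<lambda>j. Vert n s (u @ take j v)) ` {..length v}. \<omega> i = \<omega>' i"
      have "\<omega> (Vert n s u) = \<omega>' (Vert n s u)" using a z by blast
      then show "(length v \<le> h \<longrightarrow> inT \<omega> n s u v \<longrightarrow> a \<le> snd (\<omega> (Vert n s u)) + relL \<omega> n s u v) = (length v \<le> h \<longrightarrow> inT \<omega>' n s u v \<longrightarrow> a \<le> snd (\<omega>' (Vert n s u)) + relL \<omega>' n s u v)"
        using inT_fin[OF a] relL_fin[OF a] by simp
    qed
  qed
  then show ?thesis unfolding H_def by (rule pred_sets)
qed


lemma three_avg: "(\<Sum>d\<in>{-1,0,1::int}. (f::ennreal)) / 3 = f"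
proof -
  have "(\<Sum>d\<in>{-1,0,1::int}. f) = f * 3" by (simp add: mult.commute)
  then show ?thesis by (simp add: ennreal_mult_divide_eq)
qed

lemma int_coord_fst: "(\<integral>\<^sup>+ x. F (fst x) \<partial>coord) = (\<integral>\<^sup>+ c. F c \<partial>geometric_pmf (1/2))"
  unfolding int_coord by (simp only: fst_conv three_avg)

lemma all_list: "(\<forall>v. Q v) \<longleftrightarrow> Q [] \<and> (\<forall>k v. Q (k # v))"
  by (metis list.exhaust)

lemma G_0: "G 0 n s u a = (if a \<le> 0 then UNIV else {})"
  unfolding G_def by auto

lemma G_Suc: "G (Suc h) n s u a = {\<omega>. a \<le> 0 \<and> (\<forall>k<fst (\<omega> (Vert n s u)). \<omega> \<in> H h n s (u@[k]) a)}"
  unfolding G_def H_def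
  by (subst all_list) (auto simp: inT_Cons relL_Cons)

lemma dep_mono: "dep E A \<Longrightarrow> A \<subseteq> B \<Longrightarrow> dep E B"
  unfolding dep_def by blast

lemma dep_INT: "(\<And>k. k \<in> K \<Longrightarrow> dep (E k) A) \<Longrightarrow> dep (\<Inter>k\<in>K. E k) A"
  unfolding dep_def by blast

lemma desc_disj: "k \<noteq> k' \<Longrightarrow> desc n s (u@[k]) \<inter> desc n s (u@[k']) = {}"
  unfolding desc_def by auto

lemma self_notin_child: "Vert n s u \<notin> desc n s (u@[k])"
  unfolding desc_def by auto

lemma prod_H:
  "(\<Inter>k\<in>{..<c}. H h n s (u@[k]) a) \<in> sets Omega \<and>
   measure Omega (\<Inter>k\<in>{..<c}. H h n s (u@[k]) a) = (\<Prod>k<c. measure Omega (H h n s (u@[k]) a))"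
proof (induction c)
  case 0
  have "measure Omega UNIV = 1" using O.prob_space by simp
  moreover have "UNIV \<in> sets Omega" using sets.top[of Omega] by simp
  ultimately show ?case by simp
next
  case (Suc c)
  have e: "(\<Inter>k\<in>{..<Suc c}. H h n s (u@[k]) a) = (\<Inter>k\<in>{..<c}. H h n s (u@[k]) a) \<inter> H h n s (u@[c]) a"
    by (auto simp: lessThan_Suc)
  have d1: "dep (\<Inter>k\<in>{..<c}. H h n s (u@[k]) a) (\<Union>k\<in>{..<c}. desc n s (u@[k]))"
  proof (rule dep_INT)
    fix k assume "k \<in> {..<c}"
    then show "dep (H h n s (u@[k]) a) (\<Union>k\<in>{..<c}. desc n s (u@[k]))"
      by (intro dep_mono[OF dep_H]) auto
  qed
  have dj: "(\<Union>k\<in>{..<c}. desc n s (u@[k])) \<inter> desc n s (u@[c]) = {}"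
  proof (rule equals0I)
    fix x assume "x \<in> (\<Union>k\<in>{..<c}. desc n s (u@[k])) \<inter> desc n s (u@[c])"
    then obtain k where k: "k < c" "x \<in> desc n s (u@[k])" "x \<in> desc n s (u@[c])" by auto
    then have "k \<noteq> c" by simp
    from desc_disj[OF this, of n s u] k show False by auto
  qed
  have S: "(\<Inter>k\<in>{..<c}. H h n s (u@[k]) a) \<in> sets Omega" using Suc.IH by blast
  have M: "measure Omega (\<Inter>k\<in>{..<c}. H h n s (u@[k]) a) = (\<Prod>k<c. measure Omega (H h n s (u@[k]) a))"
    using Suc.IH by blast
  have "measure Omega ((\<Inter>k\<in>{..<c}. H h n s (u@[k]) a) \<inter> H h n s (u@[c]) a)
      = measure Omega (\<Inter>k\<in>{..<c}. H h n s (u@[k]) a) * measure Omega (H h n s (u@[c]) a)"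
    by (rule indep_events[OF S H_sets d1 dep_H dj])
  then have "measure Omega (\<Inter>k\<in>{..<Suc c}. H h n s (u@[k]) a) = (\<Prod>k<Suc c. measure Omega (H h n s (u@[k]) a))"
    by (simp only: e M prod.lessThan_Suc)
  moreover have "(\<Inter>k\<in>{..<Suc c}. H h n s (u@[k]) a) \<in> sets Omega"
    unfolding e by (rule sets.Int[OF S H_sets])
  ultimately show ?case by blast
qed

lemma inT_fstcong: "(\<And>x. fst (\<omega> x) = fst (\<omega>' x)) \<Longrightarrow> inT \<omega> n s u v = inT \<omega>' n s u v"
  unfolding inT_def by simp

lemma relL_upd_self: "relL (fun_upd \<omega> (Vert n s u) y) n s u v = relL \<omega> n s u v"
  unfolding relL_def
proof (rule sum.cong)
  fix j assume "j \<in> {1..length v}"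
  then have "take j v \<noteq> []" by auto
  then show "snd (fun_upd \<omega> (Vert n s u) y (Vert n s (u @ take j v))) = snd (\<omega> (Vert n s (u @ take j v)))" by simp
qed simp

lemma H_upd: "(fun_upd \<omega> (Vert n s u) (c, d) \<in> H h n s u a) \<longleftrightarrow> (fun_upd \<omega> (Vert n s u) (c, 0) \<in> G h n s u (a - d))"
proof -
  have "inT (fun_upd \<omega> (Vert n s u) (c, d)) n s u v = inT (fun_upd \<omega> (Vert n s u) (c, 0)) n s u v" for v
    by (rule inT_fstcong) simp
  then show ?thesis unfolding H_def G_def by (auto simp: relL_upd_self)
qed

lemma G_upd: "(fun_upd \<omega> (Vert n s u) (c, d) \<in> G h n s u b) \<longleftrightarrow> (fun_upd \<omega> (Vert n s u) (c, 0) \<in> G h n s u b)"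
proof -
  have "inT (fun_upd \<omega> (Vert n s u) (c, d)) n s u v = inT (fun_upd \<omega> (Vert n s u) (c, 0)) n s u v" for v
    by (rule inT_fstcong) simp
  then show ?thesis unfolding G_def by (auto simp: relL_upd_self)
qed

lemma emeq: "emeasure Omega A = ennreal (measure Omega A)"
  by (rule O.emeasure_eq_measure)

lemma H_meas:
  assumes IH: "\<And>u b. measure Omega (G h n s u b) = gv h b"
  shows "measure Omega (H h n s u a) = (gv h (a-1) + gv h a + gv h (a+1))/3"
proof -
  define i where "i = Vert n s u"
  define g where "g c b = emeasure Omega {\<omega>. fun_upd \<omega> i (c, 0) \<in> G h n s u b}" for c b
  have gG: "ennreal (gv h b) = (\<integral>\<^sup>+ c. g c b \<partial>geometric_pmf (1/2))" for b
  proof -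
    have "ennreal (gv h b) = emeasure Omega (G h n s u b)" using IH[of u b] by (simp add: emeq)
    also have "... = (\<integral>\<^sup>+ x. emeasure Omega {\<omega>. fun_upd \<omega> i x \<in> G h n s u b} \<partial>coord)"
      by (rule cond_coord[OF G_sets])
    also have "... = (\<integral>\<^sup>+ x. g (fst x) b \<partial>coord)"
    proof (intro nn_integral_cong)
      fix x :: "nat \<times> int"
      obtain c d where x: "x = (c, d)" by (cases x)
      have "{\<omega>. fun_upd \<omega> i x \<in> G h n s u b} = {\<omega>. fun_upd \<omega> i (c, 0) \<in> G h n s u b}"
        unfolding x i_def by (rule Collect_cong) (rule G_upd)
      then show "emeasure Omega {\<omega>. fun_upd \<omega> i x \<in> G h n s u b} = g (fst x) b" by (simp add: g_def x)
    qed
    also have "... = (\<integral>\<^sup>+ c. g c b \<partial>geometric_pmf (1/2))" by (rule int_coord_fst)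
    finally show ?thesis .
  qed
  have "emeasure Omega (H h n s u a) = (\<integral>\<^sup>+ x. emeasure Omega {\<omega>. fun_upd \<omega> i x \<in> H h n s u a} \<partial>coord)"
    by (rule cond_coord[OF H_sets])
  also have "... = (\<integral>\<^sup>+ x. g (fst x) (a - snd x) \<partial>coord)"
  proof (intro nn_integral_cong)
    fix x :: "nat \<times> int"
    obtain c d where x: "x = (c, d)" by (cases x)
    have "{\<omega>. fun_upd \<omega> i x \<in> H h n s u a} = {\<omega>. fun_upd \<omega> i (c, 0) \<in> G h n s u (a - d)}"
      unfolding x i_def by (rule Collect_cong) (rule H_upd)
    then show "emeasure Omega {\<omega>. fun_upd \<omega> i x \<in> H h n s u a} = g (fst x) (a - snd x)" by (simp add: g_def x)
  qed
  also have "... = (\<integral>\<^sup>+ c. (\<Sum>d\<in>{-1,0,1}. g c (a - d)) / 3 \<partial>geometric_pmf (1/2))"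
    by (simp add: int_coord)
  also have "... = (\<integral>\<^sup>+ c. (\<Sum>d\<in>{-1,0,1}. g c (a - d)) \<partial>geometric_pmf (1/2)) / 3"
    by (rule nn_integral_divide) simp
  also have "... = (\<Sum>d\<in>{-1,0,1}. (\<integral>\<^sup>+ c. g c (a - d) \<partial>geometric_pmf (1/2))) / 3"
    by (subst nn_integral_sum) auto
  also have "... = (\<Sum>d\<in>{-1,0,1}. ennreal (gv h (a - d))) / 3"
    by (simp only: gG)
  also have "... = (ennreal (gv h (a-1)) + ennreal (gv h a) + ennreal (gv h (a+1))) / 3"
    by (simp add: add_ac)
  also have "... = ennreal ((gv h (a-1) + gv h a + gv h (a+1))/3)"
  proof -
    have g: "0 \<le> gv h (a-1)" "0 \<le> gv h a" "0 \<le> gv h (a+1)" using gv_bounds by auto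
    show ?thesis by (metis add_increasing2 ennreal_divide_numeral ennreal_plus g)
  qed
  finally have "ennreal (measure Omega (H h n s u a)) = ennreal ((gv h (a-1) + gv h a + gv h (a+1))/3)"
    by (simp add: emeq)
  moreover have "0 \<le> (gv h (a-1) + gv h a + gv h (a+1))/3" using gv_bounds by (simp add: add_nonneg_nonneg)
  ultimately show ?thesis by (simp add: ennreal_inj)
qed


lemma G_meas: "measure Omega (G h n s u a) = gv h a"
proof (induction h arbitrary: u a)
  case 0
  have "measure Omega UNIV = 1" using O.prob_space by simp
  then show ?case by (simp add: G_0)
next
  case (Suc h)
  define i where "i = Vert n s u"
  define hv where "hv = (gv h (a-1) + gv h a + gv h (a+1))/3"
  have hv: "0 \<le> hv" "hv \<le> 1" using gv_bounds[of h "a-1"] gv_bounds[of h a] gv_bounds[of h "a+1"] by (auto simp: hv_def)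
  have Hm: "measure Omega (H h n s u' a) = hv" for u'
    unfolding hv_def by (rule H_meas) (rule Suc.IH)
  have seteq: "{\<omega>. fun_upd \<omega> i x \<in> G (Suc h) n s u a} = (if a \<le> 0 then (\<Inter>k\<in>{..<fst x}. H h n s (u@[k]) a) else {})" for x
  proof -
    have "fun_upd \<omega> i x \<in> H h n s (u@[k]) a \<longleftrightarrow> \<omega> \<in> H h n s (u@[k]) a" for \<omega> k
      unfolding i_def by (rule dep_upd[OF dep_H self_notin_child])
    then show ?thesis by (auto simp: G_Suc i_def)
  qed
  have em: "emeasure Omega {\<omega>. fun_upd \<omega> i x \<in> G (Suc h) n s u a} = (if a \<le> 0 then ennreal (hv ^ fst x) else 0)" for x
  proof (cases "a \<le> 0")
    case True
    have "measure Omega (\<Inter>k\<in>{..<fst x}. H h n s (u@[k]) a) = hv ^ fst x"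
      using prod_H[where c="fst x" and h=h and n=n and s=s and u=u and a=a] by (simp add: Hm)
    then show ?thesis using True by (simp add: seteq emeq)
  next
    case False then show ?thesis by (simp add: seteq)
  qed
  have "emeasure Omega (G (Suc h) n s u a) = (\<integral>\<^sup>+ x. emeasure Omega {\<omega>. fun_upd \<omega> i x \<in> G (Suc h) n s u a} \<partial>coord)"
    by (rule cond_coord[OF G_sets])
  also have "... = (\<integral>\<^sup>+ x. (\<lambda>c. if a \<le> 0 then ennreal (hv ^ c) else 0) (fst x) \<partial>coord)"
    by (simp only: em)
  also have "... = (\<integral>\<^sup>+ c. (if a \<le> 0 then ennreal (hv ^ c) else 0) \<partial>geometric_pmf (1/2))"
    by (rule int_coord_fst)
  also have "... = (if a \<le> 0 then ennreal (1/(2-hv)) else 0)"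
    using geom_gf[OF hv] by simp
  finally have "ennreal (measure Omega (G (Suc h) n s u a)) = ennreal (gv (Suc h) a)"
    by (simp add: emeq hv_def)
  then show ?case using gv_bounds[of "Suc h" a] by (simp add: ennreal_inj)
qed

definition TL :: "nat \<Rightarrow> bool \<Rightarrow> int \<Rightarrow> (idx \<Rightarrow> nat \<times> int) set" where
  "TL n s b = {\<omega>. \<forall>v. inT \<omega> n s [] v \<longrightarrow> b \<le> relL \<omega> n s [] v}"

lemma TL_INT: "TL n s b = (\<Inter>h. G h n s [] b)"
  unfolding TL_def G_def by auto

lemma TL_sets: "TL n s b \<in> sets Omega"
  unfolding TL_INT using G_sets by (intro sets.countable_INT) auto

lemma dep_TL: "dep (TL n s b) (desc n s [])"
  unfolding TL_INT by (rule dep_INT) (rule dep_G)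

lemma TL_meas: "measure Omega (TL n s b) = Wt b"
proof -
  have dec: "decseq (\<lambda>h. G h n s [] b)"
    unfolding decseq_def G_def by auto
  have "(\<lambda>h. measure Omega (G h n s [] b)) \<longlonglongrightarrow> measure Omega (\<Inter>h. G h n s [] b)"
    by (rule O.finite_Lim_measure_decseq[OF _ dec]) (auto intro: G_sets)
  then have "(\<lambda>h. gv h b) \<longlonglongrightarrow> measure Omega (TL n s b)" by (simp add: G_meas TL_INT)
  from LIMSEQ_unique[OF this gv_lim] show ?thesis .
qed


definition Aev :: "nat \<Rightarrow> nat \<Rightarrow> int \<Rightarrow> (idx \<Rightarrow> nat \<times> int) set" where
  "Aev m N x = {\<omega>. \<forall>n<N. (\<forall>j\<le>n. x + X \<omega> j \<noteq> -1) \<longrightarrow> \<omega> \<in> TL n True (1 - int m - x - X \<omega> n)}"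

lemma X_0[simp]: "X \<omega> 0 = 0" by (simp add: X_def)

lemma X_Suc: "X \<omega> (Suc j) = snd (\<omega> (Spine 0)) + X (theta \<omega>) j"
  unfolding X_def theta_def using sum.lessThan_Suc_shift[of "\<lambda>i. snd (\<omega> (Spine i))" j] by simp

lemma inT_theta: "inT (theta \<omega>) n s u v = inT \<omega> (Suc n) s u v"
  unfolding inT_def theta_def by simp

lemma relL_theta: "relL (theta \<omega>) n s u v = relL \<omega> (Suc n) s u v"
  unfolding relL_def theta_def by simp

lemma TL_theta: "theta \<omega> \<in> TL n s b \<longleftrightarrow> \<omega> \<in> TL (Suc n) s b"
  unfolding TL_def by (simp add: inT_theta relL_theta)

lemma all_le_Suc: "(\<forall>j\<le>Suc n. P j) \<longleftrightarrow> P 0 \<and> (\<forall>j\<le>n. P (Suc j))"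
proof
  assume "\<forall>j\<le>Suc n. P j" then show "P 0 \<and> (\<forall>j\<le>n. P (Suc j))" by simp
next
  assume a: "P 0 \<and> (\<forall>j\<le>n. P (Suc j))"
  show "\<forall>j\<le>Suc n. P j"
  proof (intro allI impI)
    fix j assume "j \<le> Suc n"
    then show "P j" using a by (cases j) auto
  qed
qed

lemma Aev_0: "Aev m 0 x = UNIV" by (simp add: Aev_def)

lemma Aev_m1: "Aev m N (-1) = UNIV"
  unfolding Aev_def by auto

lemma Aev_Suc:
  assumes "x \<noteq> -1"
  shows "Aev m (Suc N) x = TL 0 True (1 - int m - x) \<inter> {\<omega>. theta \<omega> \<in> Aev m N (x + snd (\<omega> (Spine 0)))}"
proof (rule set_eqI)
  fix \<omega> :: "idx \<Rightarrow> nat \<times> int"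
  have e: "(\<forall>j\<le>Suc n. x + X \<omega> j \<noteq> -1) \<longleftrightarrow> (\<forall>j\<le>n. (x + snd (\<omega> (Spine 0))) + X (theta \<omega>) j \<noteq> -1)" for n
    using assms by (simp add: all_le_Suc X_Suc add.assoc)
  have t: "\<omega> \<in> TL (Suc n) True (1 - int m - x - X \<omega> (Suc n)) \<longleftrightarrow>
           theta \<omega> \<in> TL n True (1 - int m - (x + snd (\<omega> (Spine 0))) - X (theta \<omega>) n)" for n
    by (simp add: TL_theta X_Suc algebra_simps)
  show "\<omega> \<in> Aev m (Suc N) x \<longleftrightarrow> \<omega> \<in> TL 0 True (1 - int m - x) \<inter> {\<omega>. theta \<omega> \<in> Aev m N (x + snd (\<omega> (Spine 0)))}"
    unfolding Aev_def using assms by (simp add: All_less_Suc2 e t)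
qed

lemma Aev_sets: "Aev m N x \<in> sets Omega"
proof -
  have e: "Aev m N x = {\<omega>. \<forall>n u. n < N \<longrightarrow> (\<forall>j\<le>n. x + X \<omega> j \<noteq> -1) \<longrightarrow> inT \<omega> n True [] u \<longrightarrow> 1 - int m - x - X \<omega> n \<le> relL \<omega> n True [] u}"
    unfolding Aev_def TL_def by auto
  have "(\<lambda>\<omega>. \<forall>n u. n < N \<longrightarrow> (\<forall>j\<le>n. x + X \<omega> j \<noteq> -1) \<longrightarrow> inT \<omega> n True [] u \<longrightarrow> 1 - int m - x - X \<omega> n \<le> relL \<omega> n True [] u) \<in> measurable Omega (count_space UNIV)"
  proof (intro pred_intros_countable)
    fix n :: nat and u :: "nat list"
    define J where "J = Spine ` {..<n} \<union> (\<lambda>j. Vert n True ([] @ take j u)) ` {..length u}"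
    have J: "finite J" unfolding J_def by simp
    show "(\<lambda>\<omega>. n < N \<longrightarrow> (\<forall>j\<le>n. x + X \<omega> j \<noteq> -1) \<longrightarrow> inT \<omega> n True [] u \<longrightarrow> 1 - int m - x - X \<omega> n \<le> relL \<omega> n True [] u) \<in> measurable Omega (count_space UNIV)"
    proof (rule fin_dep_pred[OF J])
      fix \<omega> \<omega>' :: "idx \<Rightarrow> nat \<times> int"
      assume a: "\<forall>i\<in>J. \<omega> i = \<omega>' i"
      have a2: "\<forall>i\<in>(\<lambda>j. Vert n True ([] @ take j u)) ` {..length u}. \<omega> i = \<omega>' i" using a unfolding J_def by blast
      have Xe: "X \<omega> j = X \<omega>' j" if "j \<le> n" for j
        unfolding X_def using a that unfolding J_def by (intro sum.cong) auto
      show "(n < N \<longrightarrow> (\<forall>j\<le>n. x + X \<omega> j \<noteq> -1) \<longrightarrow> inT \<omega> n True [] u \<longrightarrow> 1 - int m - x - X \<omega> n \<le> relL \<omega> n True [] u) =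
            (n < N \<longrightarrow> (\<forall>j\<le>n. x + X \<omega>' j \<noteq> -1) \<longrightarrow> inT \<omega>' n True [] u \<longrightarrow> 1 - int m - x - X \<omega>' n \<le> relL \<omega>' n True [] u)"
        using inT_fin[OF a2] relL_fin[OF a2] Xe by simp
    qed
  qed
  then show ?thesis unfolding e by (rule pred_sets)
qed

lemma V_nonneg: "0 \<le> V m N x"
  by (induction N arbitrary: x) (auto intro!: divide_nonneg_pos mult_nonneg_nonneg add_nonneg_nonneg simp: Wt_bounds)

lemma Aev_meas: "measure Omega (Aev m N x) = V m N x"
proof (induction N arbitrary: x)
  case 0
  have "measure Omega UNIV = 1" using O.prob_space by simp
  then show ?case by (simp add: Aev_0)
next
  case (Suc N)
  show ?case
  proof (cases "x = -1")
    case True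
    have "measure Omega UNIV = 1" using O.prob_space by simp
    then show ?thesis using True by (simp add: Aev_m1)
  next
    case False
    define W where "W = Wt (1 - int m - x)"
    have dj: "desc 0 True [] \<inter> range shift = {}"
    proof (rule equals0I)
      fix i assume "i \<in> desc 0 True [] \<inter> range shift"
      then obtain y z where "i = Vert 0 True z" "i = shift y" by (auto simp: desc_def)
      then show False by (cases y) auto
    qed
    have sp: "Spine 0 \<notin> desc 0 True []" by (auto simp: desc_def)
    have th: "theta (fun_upd \<omega> (Spine 0) y) = theta \<omega>" for \<omega> y
    proof -
      have "shift i \<noteq> Spine 0" for i by (cases i) auto
      then show ?thesis unfolding theta_def by (auto simp: fun_eq_iff)
    qed
    have seteq: "{\<omega>. fun_upd \<omega> (Spine 0) (c, d) \<in> Aev m (Suc N) x} = TL 0 True (1 - int m - x) \<inter> theta -` Aev m N (x + d)" for c d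
    proof -
      have "fun_upd \<omega> (Spine 0) (c, d) \<in> TL 0 True (1 - int m - x) \<longleftrightarrow> \<omega> \<in> TL 0 True (1 - int m - x)" for \<omega>
        by (rule dep_upd[OF dep_TL sp])
      then show ?thesis using th by (auto simp: Aev_Suc[OF False])
    qed
    have em: "emeasure Omega {\<omega>. fun_upd \<omega> (Spine 0) (c, d) \<in> Aev m (Suc N) x} = ennreal (W * V m N (x + d))" for c d
    proof -
      have "measure Omega (TL 0 True (1 - int m - x) \<inter> theta -` Aev m N (x + d)) =
            measure Omega (TL 0 True (1 - int m - x)) * measure Omega (theta -` Aev m N (x + d))"
        by (rule indep_events[OF TL_sets theta_sets[OF Aev_sets] dep_TL dep_theta dj])
      also have "... = W * V m N (x + d)"
        by (simp add: TL_meas theta_pres[OF Aev_sets] Suc.IH W_def)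
      finally show ?thesis by (simp add: seteq emeq)
    qed
    have "emeasure Omega (Aev m (Suc N) x) = (\<integral>\<^sup>+ y. emeasure Omega {\<omega>. fun_upd \<omega> (Spine 0) y \<in> Aev m (Suc N) x} \<partial>coord)"
      by (rule cond_coord[OF Aev_sets])
    also have "... = (\<integral>\<^sup>+ y. ennreal (W * V m N (x + snd y)) \<partial>coord)"
      by (rule nn_integral_cong) (metis em prod.collapse)
    also have "... = (\<integral>\<^sup>+ c. (\<Sum>d\<in>{-1,0,1}. ennreal (W * V m N (x + d))) / 3 \<partial>geometric_pmf (1/2))"
      by (simp only: int_coord snd_conv)
    also have "... = (\<Sum>d\<in>{-1,0,1}. ennreal (W * V m N (x + d))) / 3"
      by (simp add: measure_pmf.emeasure_space_1)
    also have "... = (ennreal (W * V m N (x-1)) + ennreal (W * V m N x) + ennreal (W * V m N (x+1))) / 3"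
      by (simp add: add_ac)
    also have "... = ennreal ((W * V m N (x-1) + W * V m N x + W * V m N (x+1)) / 3)"
    proof -
      have W0: "0 \<le> W" using Wt_bounds by (simp add: W_def)
      have g: "0 \<le> W * V m N (x-1)" "0 \<le> W * V m N x" "0 \<le> W * V m N (x+1)"
        using W0 V_nonneg by auto
      show ?thesis by (metis add_increasing2 ennreal_divide_numeral ennreal_plus g)
    qed
    also have "(W * V m N (x-1) + W * V m N x + W * V m N (x+1)) / 3 = V m (Suc N) x"
      using False by (simp add: W_def algebra_simps)
    finally show ?thesis using V_nonneg[of m "Suc N" x] by (simp add: emeq ennreal_inj)
  qed
qed


lemma sigma_0: "sigma \<omega> 0 = enat 0"
proof -
  have "\<exists>n. X \<omega> n = - int 0" by (rule exI[of _ 0]) simp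
  moreover have "(LEAST n. X \<omega> n = - int 0) = 0" by (rule Least_eq_0) simp
  ultimately show ?thesis by (simp add: sigma_def)
qed

lemma sigma_1: "enat n < sigma \<omega> (Suc 0) \<longleftrightarrow> (\<forall>j\<le>n. X \<omega> j \<noteq> -1)"
proof (cases "\<exists>k. X \<omega> k = -1")
  case True
  define L where "L = (LEAST k. X \<omega> k = -1)"
  have s: "sigma \<omega> (Suc 0) = enat L" using True by (simp add: sigma_def L_def)
  have XL: "X \<omega> L = -1" unfolding L_def using True by (rule LeastI_ex)
  have nl: "j < L \<Longrightarrow> X \<omega> j \<noteq> -1" for j unfolding L_def by (rule not_less_Least)
  show ?thesis
  proof
    assume "enat n < sigma \<omega> (Suc 0)"
    then have "n < L" by (simp add: s)
    then show "\<forall>j\<le>n. X \<omega> j \<noteq> -1" using nl by auto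
  next
    assume a: "\<forall>j\<le>n. X \<omega> j \<noteq> -1"
    have "n < L"
    proof (rule ccontr)
      assume "\<not> n < L" then have "L \<le> n" by simp
      with a XL show False by auto
    qed
    then show "enat n < sigma \<omega> (Suc 0)" by (simp add: s)
  qed
next
  case False
  then have "sigma \<omega> (Suc 0) = \<infinity>" by (simp add: sigma_def)
  then show ?thesis using False by auto
qed

lemma gtree_inT: "u \<in> gtree \<omega> n s \<longleftrightarrow> inT \<omega> n s [] u"
  unfolding gtree_def inT_def by simp

lemma glabel_relL: "glabel \<omega> n s u = X \<omega> n + relL \<omega> n s [] u"
  unfolding glabel_def relL_def by simp

lemma SUP_int_ge:
  fixes f :: "'a \<Rightarrow> int"
  shows "ereal (real m) \<le> (SUP v\<in>S. ereal (real_of_int (f v))) \<longleftrightarrow> (\<exists>v\<in>S. int m \<le> f v)"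
proof
  assume "\<exists>v\<in>S. int m \<le> f v"
  then obtain v where v: "v \<in> S" "int m \<le> f v" by blast
  have "ereal (real m) \<le> ereal (real_of_int (f v))" using v(2) by simp
  also have "... \<le> (SUP v\<in>S. ereal (real_of_int (f v)))" using v(1) by (rule SUP_upper)
  finally show "ereal (real m) \<le> (SUP v\<in>S. ereal (real_of_int (f v)))" .
next
  assume a: "ereal (real m) \<le> (SUP v\<in>S. ereal (real_of_int (f v)))"
  show "\<exists>v\<in>S. int m \<le> f v"
  proof (rule ccontr)
    assume "\<not> (\<exists>v\<in>S. int m \<le> f v)"
    then have "\<forall>v\<in>S. f v \<le> int m - 1" by auto
    then have "(SUP v\<in>S. ereal (real_of_int (f v))) \<le> ereal (real m - 1)"
      by (intro SUP_least) auto
    from order_trans[OF a this] show False by simp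
  qed
qed

lemma Delta_event:
  "{\<omega> \<in> space Omega. Delta' \<omega> 0 \<ge> ereal (real m)} = UNIV - (\<Inter>N. Aev m N 0)"
proof (rule set_eqI)
  fix \<omega>
  have L: "Lforest \<omega> 0 = {(n, u). (\<forall>j\<le>n. X \<omega> j \<noteq> -1) \<and> inT \<omega> n True [] u}"
    unfolding Lforest_def by (simp add: sigma_0 sigma_1 gtree_inT)
  have D: "Delta' \<omega> 0 = (SUP v\<in>Lforest \<omega> 0. ereal (real_of_int (- glabel \<omega> (fst v) True (snd v))))"
    by (simp add: Delta'_def)
  have "ereal (real m) \<le> Delta' \<omega> 0 \<longleftrightarrow> (\<exists>v\<in>Lforest \<omega> 0. int m \<le> - glabel \<omega> (fst v) True (snd v))"
    unfolding D by (rule SUP_int_ge)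
  also have "... \<longleftrightarrow> (\<exists>n u. (\<forall>j\<le>n. X \<omega> j \<noteq> -1) \<and> inT \<omega> n True [] u \<and> int m \<le> - (X \<omega> n + relL \<omega> n True [] u))"
    unfolding L by (auto simp: glabel_relL)
  also have "... \<longleftrightarrow> \<omega> \<notin> (\<Inter>N. Aev m N 0)"
  proof
    assume "\<exists>n u. (\<forall>j\<le>n. X \<omega> j \<noteq> -1) \<and> inT \<omega> n True [] u \<and> int m \<le> - (X \<omega> n + relL \<omega> n True [] u)"
    then obtain n u where a: "\<forall>j\<le>n. X \<omega> j \<noteq> -1" "inT \<omega> n True [] u" "int m \<le> - (X \<omega> n + relL \<omega> n True [] u)" by blast
    have "\<omega> \<notin> Aev m (Suc n) 0"
    proof
      assume "\<omega> \<in> Aev m (Suc n) 0"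
      then have "\<omega> \<in> TL n True (1 - int m - 0 - X \<omega> n)" using a(1) unfolding Aev_def by auto
      then have "1 - int m - 0 - X \<omega> n \<le> relL \<omega> n True [] u" using a(2) unfolding TL_def by blast
      with a(3) show False by simp
    qed
    then show "\<omega> \<notin> (\<Inter>N. Aev m N 0)" by blast
  next
    assume "\<omega> \<notin> (\<Inter>N. Aev m N 0)"
    then obtain N where "\<omega> \<notin> Aev m N 0" by blast
    then obtain n where n: "\<forall>j\<le>n. X \<omega> j \<noteq> -1" "\<omega> \<notin> TL n True (1 - int m - 0 - X \<omega> n)"
      unfolding Aev_def by auto
    then obtain u where "inT \<omega> n True [] u" "\<not> (1 - int m - 0 - X \<omega> n \<le> relL \<omega> n True [] u)"
      unfolding TL_def by blast
    then show "\<exists>n u. (\<forall>j\<le>n. X \<omega> j \<noteq> -1) \<and> inT \<omega> n True [] u \<and> int m \<le> - (X \<omega> n + relL \<omega> n True [] u)"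
      using n(1) by (intro exI[of _ n] exI[of _ u]) auto
  qed
  finally show "\<omega> \<in> {\<omega> \<in> space Omega. Delta' \<omega> 0 \<ge> ereal (real m)} \<longleftrightarrow> \<omega> \<in> UNIV - (\<Inter>N. Aev m N 0)"
    by simp
qed

lemma prob_Delta:
  assumes m: "m \<ge> 1"
  shows "measure Omega {\<omega> \<in> space Omega. Delta' \<omega> 0 \<ge> ereal (real m)} = 2 / (real m + 2)"
proof -
  have dec: "decseq (\<lambda>N. Aev m N 0)"
    unfolding decseq_def Aev_def by auto
  have S: "(\<Inter>N. Aev m N 0) \<in> sets Omega" using Aev_sets by (intro sets.countable_INT) auto
  have "(\<lambda>N. measure Omega (Aev m N 0)) \<longlonglongrightarrow> measure Omega (\<Inter>N. Aev m N 0)"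
    by (rule O.finite_Lim_measure_decseq[OF _ dec]) (auto intro: Aev_sets)
  then have "(\<lambda>N. V m N 0) \<longlonglongrightarrow> measure Omega (\<Inter>N. Aev m N 0)" by (simp add: Aev_meas)
  from LIMSEQ_unique[OF this V_lim[OF m]] have P: "measure Omega (\<Inter>N. Aev m N 0) = real m / (real m + 2)" .
  have "measure Omega (space Omega - (\<Inter>N. Aev m N 0)) = 1 - measure Omega (\<Inter>N. Aev m N 0)"
    by (rule O.prob_compl[OF S])
  then have "measure Omega (UNIV - (\<Inter>N. Aev m N 0)) = 1 - real m / (real m + 2)" using P by simp
  also have "... = 2 / (real m + 2)" by (simp add: field_simps)
  finally have "measure Omega (UNIV - (\<Inter>N. Aev m N 0)) = 2 / (real m + 2)" .
  then show ?thesis by (subst Delta_event)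
qed

theorem lemma7:
  shows "(\<lambda>m::nat. measure Omega {\<omega> \<in> space Omega. Delta' \<omega> 0 \<ge> ereal (real m)} / (2 / real m))
           \<longlonglongrightarrow> 1"
proof -
  have lim: "(\<lambda>m::nat. real m / (real m + 2)) \<longlonglongrightarrow> 1" by real_asymp
  have ev: "eventually (\<lambda>m::nat. real m / (real m + 2) = measure Omega {\<omega> \<in> space Omega. Delta' \<omega> 0 \<ge> ereal (real m)} / (2 / real m)) sequentially"
  proof (rule eventually_sequentiallyI[of 1])
    fix m :: nat assume m: "m \<ge> 1"
    show "real m / (real m + 2) = measure Omega {\<omega> \<in> space Omega. Delta' \<omega> 0 \<ge> ereal (real m)} / (2 / real m)"
    proof -
      have p: "measure Omega {\<omega> \<in> space Omega. Delta' \<omega> 0 \<ge> ereal (real m)} = 2 / (real m + 2)"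
        by (rule prob_Delta[OF m])
      have "real m > 0" using m by simp
      then show ?thesis unfolding p by (simp add: field_simps)
    qed
  qed
  show ?thesis by (rule Lim_transform_eventually[OF lim ev])
qed


end
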